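(* Fix $\alpha\in[0,1)$, $p>1$ and $C>0$. If $X\sim\mathrm{RDTS}^p_\alpha(1,C)$, then $$X\stackrel{d}{=}X_0+\sum_{j=1}^{N_1}X_j+\sum_{j=1}^{N_2}Y_j,$$ where $N_1,N_2,X_0,X_1,X_2,\dots,Y_1,Y_2,\dots$ are independent random variables such that: (1) $N_1\sim\mathrm{Pois}(CK_1)$ and $N_2\sim\mathrm{Pois}(CK_2)$, where $$K_1=\int_1^\infty e^{-x^p}x^{-1-\alpha}\,dx=\frac1p\int_1^\infty e^{-x}x^{-1-\alpha/p}\,dx,\qquad K_2=\int_0^1\left(e^{-x^p}-e^{-x}\right)x^{-\alpha-1}\,dx;$$ (2) $X_0\sim\mathrm{TTS}_\alpha(C)$; (3) $X_1,X_2,\dots$ all have pdf $f_1(x)=\frac1{K_1}e^{-x^p}x^{-1-\alpha}$ for $x>1$ (and $0$ otherwise); (4) $Y_1,Y_2,\dots$ all have pdf $f_2(x)=\frac1{K_2}\left(e^{-x^p}-e^{-x}\right)x^{-\alpha-1}$ for $0<x<1$ (and $0$ otherwise). (An empty sum is $0$.)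
   Context: For $\alpha<1$, $p>1$, $b>0$, $C>0$, $\mathrm{RDTS}^p_\alpha(b,C)$ denotes the infinitely divisible distribution on $\mathbb R$ with characteristic function $z\mapsto \exp\{C\int_0^\infty(e^{ixz}-1)x^{-1-\alpha}e^{-b^px^p}\,dx\}$. For $C>0$ and $\alpha\in[0,1)$, the truncated tempered stable distribution $\mathrm{TTS}_\alpha(C)$ is the infinitely divisible distribution with characteristic function $z\mapsto\exp\{C\int_0^1(e^{ixz}-1)x^{-1-\alpha}e^{-x}\,dx\}$. $\mathrm{Pois}(\lambda)$ denotes the Poisson distribution with mean $\lambda$. *)

theory Defs
  imports "HOL-Probability.Probability"
begin

definition rdts_cf :: "real \<Rightarrow> real \<Rightarrow> real \<Rightarrow> real \<Rightarrow> real \<Rightarrow> complex" where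
  "rdts_cf p \<alpha> b C z = exp (of_real C * set_lebesgue_integral lborel {0<..}
      (\<lambda>x::real. (iexp (x * z) - 1) * of_real (x powr (-1 - \<alpha>) * exp (- ((b * x) powr p)))))"

definition is_RDTS :: "real \<Rightarrow> real \<Rightarrow> real \<Rightarrow> real \<Rightarrow> real measure \<Rightarrow> bool" where
  "is_RDTS p \<alpha> b C \<mu> \<longleftrightarrow> real_distribution \<mu> \<and> (\<forall>z. char \<mu> z = rdts_cf p \<alpha> b C z)"

definition tts_cf :: "real \<Rightarrow> real \<Rightarrow> real \<Rightarrow> complex" where
  "tts_cf \<alpha> C z = exp (of_real C * set_lebesgue_integral lborel {0<..<1}
      (\<lambda>x::real. (iexp (x * z) - 1) * of_real (x powr (-1 - \<alpha>) * exp (- x))))"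

definition is_TTS :: "real \<Rightarrow> real \<Rightarrow> real measure \<Rightarrow> bool" where
  "is_TTS \<alpha> C \<mu> \<longleftrightarrow> real_distribution \<mu> \<and> (\<forall>z. char \<mu> z = tts_cf \<alpha> C z)"

definition K1 :: "real \<Rightarrow> real \<Rightarrow> real" where
  "K1 p \<alpha> = (LBINT x:{1<..}. exp (- (x powr p)) * x powr (-1 - \<alpha>))"

definition K2 :: "real \<Rightarrow> real \<Rightarrow> real" where
  "K2 p \<alpha> = (LBINT x:{0<..<1}. (exp (- (x powr p)) - exp (- x)) * x powr (- \<alpha> - 1))"

definition f1 :: "real \<Rightarrow> real \<Rightarrow> real \<Rightarrow> real" where
  "f1 p \<alpha> x = (if 1 < x then exp (- (x powr p)) * x powr (-1 - \<alpha>) / K1 p \<alpha> else 0)"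

definition f2 :: "real \<Rightarrow> real \<Rightarrow> real \<Rightarrow> real" where
  "f2 p \<alpha> x = (if 0 < x \<and> x < 1 then (exp (- (x powr p)) - exp (- x)) * x powr (- \<alpha> - 1) / K2 p \<alpha> else 0)"

text \<open>Index set for the independent family: N1, N2, X0, X_j, Y_j (j >= 1).\<close>
datatype idx = IN1 | IN2 | IX0 | IX nat | IY nat

end

theory Submission
  imports Defs
begin


lemma integrable_if_eq:
  fixes F :: "'a \<Rightarrow> complex" and N :: "'a \<Rightarrow> nat"
  assumes N[measurable]: "N \<in> measurable M (count_space UNIV)" and F: "integrable M F"
  shows "integrable M (\<lambda>\<omega>. if N \<omega> = n then F \<omega> else 0)"
proof -
  have Fm[measurable]: "F \<in> borel_measurable M" using F by auto
  have h: "integrable M (\<lambda>\<omega>. indicator {\<omega>\<in>space M. N \<omega> = n} \<omega> *\<^sub>R F \<omega>)"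
    by (rule integrable_mult_indicator) (auto simp: F)
  show ?thesis by (rule Bochner_Integration.integrable_cong[THEN iffD1, OF refl _ h]) (auto simp: indicator_def)
qed

lemma (in prob_space) sums_split_nat:
  fixes F :: "'a \<Rightarrow> complex" and N :: "'a \<Rightarrow> nat"
  assumes N[measurable]: "N \<in> measurable M (count_space UNIV)" and F: "integrable M F"
  shows "(\<lambda>n. \<integral>\<omega>. (if N \<omega> = n then F \<omega> else 0) \<partial>M) sums (\<integral>\<omega>. F \<omega> \<partial>M)"
proof -
  have Fm[measurable]: "F \<in> borel_measurable M" using F by auto
  have int: "integrable M (\<lambda>\<omega>. if N \<omega> = n then F \<omega> else 0)" for n
  proof -
    have h: "integrable M (\<lambda>\<omega>. indicator {\<omega>\<in>space M. N \<omega> = n} \<omega> *\<^sub>R F \<omega>)"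
      by (rule integrable_mult_indicator) (auto simp: F)
    show ?thesis by (rule Bochner_Integration.integrable_cong[THEN iffD1, OF refl _ h]) (auto simp: indicator_def)
  qed
  have eq: "(\<Sum>n<k. \<integral>\<omega>. (if N \<omega> = n then F \<omega> else 0) \<partial>M) = (\<integral>\<omega>. (if N \<omega> < k then F \<omega> else 0) \<partial>M)" for k
  proof -
    have "(\<Sum>n<k. \<integral>\<omega>. (if N \<omega> = n then F \<omega> else 0) \<partial>M) = (\<integral>\<omega>. (\<Sum>n<k. if N \<omega> = n then F \<omega> else 0) \<partial>M)"
      by (rule Bochner_Integration.integral_sum[symmetric]) (rule int)
    also have "\<dots> = (\<integral>\<omega>. (if N \<omega> < k then F \<omega> else 0) \<partial>M)"
      by (rule Bochner_Integration.integral_cong) (auto simp: sum.delta)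
    finally show ?thesis .
  qed
  have "(\<lambda>k. \<integral>\<omega>. (if N \<omega> < k then F \<omega> else 0) \<partial>M) \<longlonglongrightarrow> (\<integral>\<omega>. F \<omega> \<partial>M)"
  proof (rule integral_dominated_convergence[where w="\<lambda>\<omega>. norm (F \<omega>)"])
    show "AE x in M. (\<lambda>i. if N x < i then F x else 0) \<longlonglongrightarrow> F x"
    proof (rule AE_I2)
      fix x
      have "eventually (\<lambda>i. (if N x < i then F x else 0) = F x) sequentially"
        by (rule eventually_sequentiallyI[of "Suc (N x)"]) auto
      then show "(\<lambda>i. if N x < i then F x else 0) \<longlonglongrightarrow> F x"
        by (rule tendsto_eventually)
    qed
  qed (auto simp: F)
  then show ?thesis unfolding sums_def eq .
qed



lemma prod_J:
  fixes h :: "idx \<Rightarrow> 'c::comm_monoid_mult"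
  shows "(\<Prod>i\<in>{IN1, IN2, IX0} \<union> IX ` {1..n} \<union> IY ` {1..m}. h i)
     = h IN1 * h IN2 * h IX0 * (\<Prod>j\<in>{1..n}. h (IX j)) * (\<Prod>j\<in>{1..m}. h (IY j))"
proof -
  have "{IN1, IN2, IX0} \<union> IX ` {1..n} \<union> IY ` {1..m} = insert IN1 (insert IN2 (insert IX0 (IX ` {1..n} \<union> IY ` {1..m})))"
    by auto
  moreover have "(\<Prod>i\<in>IX ` {1..n} \<union> IY ` {1..m}. h i) = (\<Prod>i\<in>IX ` {1..n}. h i) * (\<Prod>i\<in>IY ` {1..m}. h i)"
    by (rule prod.union_disjoint) auto
  moreover have "(\<Prod>i\<in>IX ` {1..n}. h i) = (\<Prod>j\<in>{1..n}. h (IX j))"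
    by (subst prod.reindex) (auto simp: inj_on_def)
  moreover have "(\<Prod>i\<in>IY ` {1..m}. h i) = (\<Prod>j\<in>{1..m}. h (IY j))"
    by (subst prod.reindex) (auto simp: inj_on_def)
  ultimately show ?thesis by (simp add: mult.assoc image_iff)
qed

lemma poisson_sums:
  fixes l :: real and c :: complex
  assumes "0 < l"
  shows "(\<lambda>n. complex_of_real (pmf (poisson_pmf l) n) * c ^ n) sums exp (of_real l * (c - 1))"
proof -
  have "(\<lambda>n. (of_real l * c) ^ n /\<^sub>R fact n) sums exp (of_real l * c)"
    by (rule exp_converges)
  then have "(\<lambda>n. of_real (exp (-l)) * ((of_real l * c) ^ n /\<^sub>R fact n)) sums (of_real (exp (-l)) * exp (of_real l * c))"
    by (rule sums_mult)
  moreover have "of_real (exp (-l)) * exp (of_real l * c) = exp (of_real l * (c - 1))"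
    by (simp add: exp_of_real[symmetric] exp_add[symmetric] algebra_simps)
  moreover have "of_real (exp (-l)) * ((of_real l * c) ^ n /\<^sub>R fact n) = complex_of_real (pmf (poisson_pmf l) n) * c ^ n" for n
    using assms by (simp add: scaleR_conv_of_real power_mult_distrib field_simps)
  ultimately show ?thesis by simp
qed

lemma density_facts:
  fixes M :: "'a measure" and Y :: "'a \<Rightarrow> real" and g f :: "real \<Rightarrow> real" and S :: "real set"
  assumes P: "prob_space M" and D: "distributed M lborel Y (\<lambda>x. ennreal (f x))"
    and fdef: "\<And>x. f x = (if x \<in> S then g x / K else 0)"
    and Kdef: "K = (LBINT x:S. g x)"
    and gnn: "\<And>x. x \<in> S \<Longrightarrow> 0 \<le> g x"
    and Sm[measurable]: "S \<in> sets borel" and gm[measurable]: "g \<in> borel_measurable borel"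
  shows "0 < K" "set_integrable lborel S g"
    "\<And>z. complex_of_real K * (CLINT \<omega>|M. iexp (z * Y \<omega>)) = (CLINT x|lborel. indicator S x *\<^sub>R (complex_of_real (g x) * iexp (z * x)))"
proof -
  interpret prob_space M by fact
  have fm[measurable]: "f \<in> borel_measurable borel"
    unfolding fdef[abs_def] by measurable
  have Ym[measurable]: "Y \<in> borel_measurable M" using D by (auto simp: distributed_def)
  have eq: "distr M lborel Y = density lborel (\<lambda>x. ennreal (f x))" using D by (simp add: distributed_def)
  have "emeasure (distr M lborel Y) UNIV = 1"
    by (simp add: emeasure_distr emeasure_space_1)
  then have one: "(\<integral>\<^sup>+x. ennreal (f x) \<partial>lborel) = 1"
    by (simp add: eq emeasure_density)
  show Kpos: "0 < K"
  proof (rule ccontr)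
    assume "\<not> 0 < K"
    then have le0: "\<And>x. f x \<le> 0" using gnn by (auto simp: fdef divide_nonneg_nonpos)
    have "\<And>x. ennreal (f x) = 0" using le0 by (simp add: ennreal_neg)
    then have "(\<integral>\<^sup>+x. ennreal (f x) \<partial>lborel) = 0" by simp
    with one show False by simp
  qed
  have fnn: "\<And>x. 0 \<le> f x" using gnn Kpos by (auto simp: fdef)
  have fint: "integrable lborel f"
    by (rule integrableI_nonneg) (use fnn one in auto)
  have "integrable lborel (\<lambda>x. K * f x)" using fint by simp
  moreover have "K * f x = indicator S x *\<^sub>R g x" for x using Kpos by (simp add: fdef indicator_def)
  ultimately show "set_integrable lborel S g" unfolding set_integrable_def by simp
  fix z :: real
  have "(CLINT \<omega>|M. iexp (z * Y \<omega>)) = (CLINT x|distr M lborel Y. iexp (z * x))"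
    by (simp add: integral_distr)
  also have "\<dots> = (CLINT x|lborel. f x *\<^sub>R iexp (z * x))"
    unfolding eq by (rule integral_density) (auto simp: fnn)
  finally have "complex_of_real K * (CLINT \<omega>|M. iexp (z * Y \<omega>)) = of_real K * (CLINT x|lborel. f x *\<^sub>R iexp (z * x))"
    by simp
  also have "\<dots> = (CLINT x|lborel. of_real K * (f x *\<^sub>R iexp (z * x)))"
    by (rule integral_mult_right_zero[symmetric])
  also have "\<dots> = (CLINT x|lborel. indicator S x *\<^sub>R (complex_of_real (g x) * iexp (z * x)))"
    using Kpos by (intro Bochner_Integration.integral_cong) (auto simp: fdef indicator_def scaleR_conv_of_real)
  finally show "complex_of_real K * (CLINT \<omega>|M. iexp (z * Y \<omega>)) = (CLINT x|lborel. indicator S x *\<^sub>R (complex_of_real (g x) * iexp (z * x)))" .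
qed



lemma iexp_sum_prod:
  fixes f :: "nat \<Rightarrow> real"
  shows "iexp (\<Sum>j\<in>A. f j) = (\<Prod>j\<in>A. iexp (f j))"
proof (cases "finite A")
  case True then show ?thesis by (induction A rule: finite_induct) (auto simp: distrib_left exp_add)
qed simp

lemma iexp_sum3:
  fixes z a :: real and f h :: "nat \<Rightarrow> real"
  shows "iexp (z * (a + (\<Sum>j\<in>A. f j) + (\<Sum>j\<in>B. h j))) = iexp (z * a) * (\<Prod>j\<in>A. iexp (z * f j)) * (\<Prod>j\<in>B. iexp (z * h j))"
proof -
  have e: "z * (a + (\<Sum>j\<in>A. f j) + (\<Sum>j\<in>B. h j)) = z * a + (\<Sum>j\<in>A. z * f j) + (\<Sum>j\<in>B. z * h j)"
    by (simp add: algebra_simps sum_distrib_left)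
  have "iexp (z * a + (\<Sum>j\<in>A. z * f j) + (\<Sum>j\<in>B. z * h j)) = iexp (z * a) * iexp (\<Sum>j\<in>A. z * f j) * iexp (\<Sum>j\<in>B. z * h j)"
    by (simp only: of_real_add distrib_left exp_add)
  then show ?thesis unfolding e iexp_sum_prod .
qed

lemma (in prob_space) compound_char:
  fixes N1 N2 :: "'a \<Rightarrow> nat" and X0 :: "'a \<Rightarrow> real" and Xs Ys :: "nat \<Rightarrow> 'a \<Rightarrow> real"
    and z l1 l2 :: real and \<phi>1 \<phi>2 :: complex and MM and Z and I0
  assumes MMdef: "MM = (\<lambda>i. case i of IN1 \<Rightarrow> embed_measure (count_space UNIV) Inl
                  | IN2 \<Rightarrow> embed_measure (count_space UNIV) Inl
                  | _ \<Rightarrow> embed_measure borel Inr)"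
    and Zdef: "Z = (\<lambda>i \<omega>. case i of IN1 \<Rightarrow> Inl (N1 \<omega>) | IN2 \<Rightarrow> Inl (N2 \<omega>) | IX0 \<Rightarrow> Inr (X0 \<omega>)
                    | IX j \<Rightarrow> Inr (Xs j \<omega>) | IY j \<Rightarrow> Inr (Ys j \<omega>))"
    and I0def: "I0 = ({IN1, IN2, IX0} \<union> {IX j | j. j \<ge> 1} \<union> {IY j | j. j \<ge> 1})"
    and ind: "indep_vars MM Z I0"
    and N1m[measurable]: "N1 \<in> measurable M (count_space UNIV)"
    and N2m[measurable]: "N2 \<in> measurable M (count_space UNIV)"
    and X0m[measurable]: "X0 \<in> borel_measurable M"
    and Xsm: "\<And>j. j \<ge> 1 \<Longrightarrow> Xs j \<in> borel_measurable M"
    and Ysm: "\<And>j. j \<ge> 1 \<Longrightarrow> Ys j \<in> borel_measurable M"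
    and dN1: "distr M (count_space UNIV) N1 = measure_pmf (poisson_pmf l1)"
    and dN2: "distr M (count_space UNIV) N2 = measure_pmf (poisson_pmf l2)"
    and l1: "0 < l1" and l2: "0 < l2"
    and phi1: "\<And>j. j \<ge> 1 \<Longrightarrow> (CLINT \<omega>|M. iexp (z * Xs j \<omega>)) = \<phi>1"
    and phi2: "\<And>j. j \<ge> 1 \<Longrightarrow> (CLINT \<omega>|M. iexp (z * Ys j \<omega>)) = \<phi>2"
  shows "(CLINT \<omega>|M. iexp (z * (X0 \<omega> + (\<Sum>j\<in>{1..N1 \<omega>}. Xs j \<omega>) + (\<Sum>j\<in>{1..N2 \<omega>}. Ys j \<omega>))))
       = (CLINT \<omega>|M. iexp (z * X0 \<omega>)) * exp (of_real l1 * (\<phi>1 - 1)) * exp (of_real l2 * (\<phi>2 - 1))"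
proof -
  define S where "S = (\<lambda>\<omega>. X0 \<omega> + (\<Sum>j\<in>{1..N1 \<omega>}. Xs j \<omega>) + (\<Sum>j\<in>{1..N2 \<omega>}. Ys j \<omega>))"
  define F where "F = (\<lambda>\<omega>. iexp (z * S \<omega>))"
  define \<phi>0 where "\<phi>0 = (CLINT \<omega>|M. iexp (z * X0 \<omega>))"
  define p1 where "p1 = (\<lambda>n. complex_of_real (pmf (poisson_pmf l1) n))"
  define p2 where "p2 = (\<lambda>n. complex_of_real (pmf (poisson_pmf l2) n))"
  have s1: "(\<lambda>\<omega>. \<Sum>j\<in>{1..N1 \<omega>}. Xs j \<omega>) \<in> borel_measurable M"
    by (rule measurable_compose_countable[where f="\<lambda>n \<omega>. \<Sum>j\<in>{1..n}. Xs j \<omega>", OF _ N1m])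
       (auto intro!: borel_measurable_sum Xsm)
  have s2: "(\<lambda>\<omega>. \<Sum>j\<in>{1..N2 \<omega>}. Ys j \<omega>) \<in> borel_measurable M"
    by (rule measurable_compose_countable[where f="\<lambda>n \<omega>. \<Sum>j\<in>{1..n}. Ys j \<omega>", OF _ N2m])
       (auto intro!: borel_measurable_sum Ysm)
  have Sm[measurable]: "S \<in> borel_measurable M"
    unfolding S_def using s1 s2 by measurable
  have Fm[measurable]: "F \<in> borel_measurable M" unfolding F_def by measurable
  have Fint: "integrable M F"
    unfolding F_def by (rule integrable_const_bound[where B=1]) (auto simp del: of_real_mult)
  have T: "(CLINT \<omega>|M. (if N2 \<omega> = m then (if N1 \<omega> = n then F \<omega> else 0) else 0))
        = p1 n * p2 m * \<phi>0 * \<phi>1 ^ n * \<phi>2 ^ m" for n m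
  proof -
    define g :: "idx \<Rightarrow> nat + real \<Rightarrow> complex" where "g = (\<lambda>i s. case i of
          IN1 \<Rightarrow> (case s of Inl k \<Rightarrow> (if k = n then 1 else 0) | Inr x \<Rightarrow> 0)
        | IN2 \<Rightarrow> (case s of Inl k \<Rightarrow> (if k = m then 1 else 0) | Inr x \<Rightarrow> 0)
        | _ \<Rightarrow> (case s of Inl k \<Rightarrow> 0 | Inr x \<Rightarrow> iexp (z * x)))"
    define J where "J = {IN1, IN2, IX0} \<union> IX ` {1..n} \<union> IY ` {1..m}"
    have JI: "J \<subseteq> I0" unfolding J_def I0def by auto
    have iem: "(\<lambda>x::real. iexp (z * x)) \<in> borel_measurable borel" by measurable
    have gm: "g i \<in> measurable (MM i) borel" for i
      by (cases i) (auto simp: MMdef g_def iem intro!: measurable_embed_measure1)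
    have indG: "indep_vars (\<lambda>_. borel) (\<lambda>i \<omega>. g i (Z i \<omega>)) J"
      by (rule indep_vars_compose2[OF indep_vars_subset[OF ind JI]]) (rule gm)
    have rvG: "i \<in> J \<Longrightarrow> (\<lambda>\<omega>. g i (Z i \<omega>)) \<in> borel_measurable M" for i
      using indG unfolding indep_vars_def by auto
    have gb: "norm (g i s) \<le> 1" for i s
      by (cases i; cases s) (auto simp: g_def simp del: of_real_mult)
    have intG: "i \<in> J \<Longrightarrow> integrable M (\<lambda>\<omega>. g i (Z i \<omega>))" for i
      by (rule integrable_const_bound[where B=1]) (auto simp: gb rvG)
    have E: "(CLINT \<omega>|M. (\<Prod>i\<in>J. g i (Z i \<omega>))) = (\<Prod>i\<in>J. CLINT \<omega>|M. g i (Z i \<omega>))"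
      by (rule indep_vars_lebesgue_integral[OF _ indG intG]) (simp add: J_def)
    have L: "(\<Prod>i\<in>J. g i (Z i \<omega>)) = (if N2 \<omega> = m then (if N1 \<omega> = n then F \<omega> else 0) else 0)" for \<omega>
    proof -
      have "(\<Prod>i\<in>J. g i (Z i \<omega>)) = g IN1 (Z IN1 \<omega>) * g IN2 (Z IN2 \<omega>) * g IX0 (Z IX0 \<omega>)
           * (\<Prod>j\<in>{1..n}. g (IX j) (Z (IX j) \<omega>)) * (\<Prod>j\<in>{1..m}. g (IY j) (Z (IY j) \<omega>))"
        unfolding J_def by (rule prod_J)
      also have "\<dots> = (if N1 \<omega> = n then 1 else 0) * (if N2 \<omega> = m then 1 else 0) * iexp (z * X0 \<omega>)
           * (\<Prod>j\<in>{1..n}. iexp (z * Xs j \<omega>)) * (\<Prod>j\<in>{1..m}. iexp (z * Ys j \<omega>))"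
        by (simp add: g_def Zdef del: of_real_mult)
      also have "\<dots> = (if N2 \<omega> = m then (if N1 \<omega> = n then F \<omega> else 0) else 0)"
        by (auto simp: F_def S_def iexp_sum3 simp del: of_real_mult)
      finally show ?thesis .
    qed
    have E1: "(CLINT \<omega>|M. g IN1 (Z IN1 \<omega>)) = p1 n"
    proof -
      have "(CLINT \<omega>|M. g IN1 (Z IN1 \<omega>)) = (CLINT \<omega>|M. complex_of_real (indicator {n} (N1 \<omega>)))"
        by (rule Bochner_Integration.integral_cong) (auto simp: g_def Zdef indicator_def)
      also have "\<dots> = of_real (LINT \<omega>|M. (indicator {n} (N1 \<omega>) :: real))" by simp
      also have "(LINT \<omega>|M. (indicator {n} (N1 \<omega>) :: real)) = (LINT k|distr M (count_space UNIV) N1. indicator {n} k)"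
        by (rule integral_distr[symmetric, OF N1m]) simp
      also have "\<dots> = pmf (poisson_pmf l1) n" unfolding dN1 by (simp add: measure_pmf_single)
      finally show ?thesis by (simp add: p1_def)
    qed
    have E2: "(CLINT \<omega>|M. g IN2 (Z IN2 \<omega>)) = p2 m"
    proof -
      have "(CLINT \<omega>|M. g IN2 (Z IN2 \<omega>)) = (CLINT \<omega>|M. complex_of_real (indicator {m} (N2 \<omega>)))"
        by (rule Bochner_Integration.integral_cong) (auto simp: g_def Zdef indicator_def)
      also have "\<dots> = of_real (LINT \<omega>|M. (indicator {m} (N2 \<omega>) :: real))" by simp
      also have "(LINT \<omega>|M. (indicator {m} (N2 \<omega>) :: real)) = (LINT k|distr M (count_space UNIV) N2. indicator {m} k)"
        by (rule integral_distr[symmetric, OF N2m]) simp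
      also have "\<dots> = pmf (poisson_pmf l2) m" unfolding dN2 by (simp add: measure_pmf_single)
      finally show ?thesis by (simp add: p2_def)
    qed
    have E3: "(CLINT \<omega>|M. g IX0 (Z IX0 \<omega>)) = \<phi>0"
      by (simp add: g_def Zdef \<phi>0_def del: of_real_mult)
    have E4: "(\<Prod>j\<in>{1..n}. CLINT \<omega>|M. g (IX j) (Z (IX j) \<omega>)) = \<phi>1 ^ n"
    proof -
      have "(\<Prod>j\<in>{1..n}. CLINT \<omega>|M. g (IX j) (Z (IX j) \<omega>)) = (\<Prod>j\<in>{1..n}. \<phi>1)"
        by (rule prod.cong) (auto simp: g_def Zdef phi1 simp del: of_real_mult)
      then show ?thesis by simp
    qed
    have E5: "(\<Prod>j\<in>{1..m}. CLINT \<omega>|M. g (IY j) (Z (IY j) \<omega>)) = \<phi>2 ^ m"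
    proof -
      have "(\<Prod>j\<in>{1..m}. CLINT \<omega>|M. g (IY j) (Z (IY j) \<omega>)) = (\<Prod>j\<in>{1..m}. \<phi>2)"
        by (rule prod.cong) (auto simp: g_def Zdef phi2 simp del: of_real_mult)
      then show ?thesis by simp
    qed
    have "(CLINT \<omega>|M. (if N2 \<omega> = m then (if N1 \<omega> = n then F \<omega> else 0) else 0)) = (CLINT \<omega>|M. (\<Prod>i\<in>J. g i (Z i \<omega>)))"
      by (simp add: L)
    also have "\<dots> = (\<Prod>i\<in>J. CLINT \<omega>|M. g i (Z i \<omega>))" by (rule E)
    also have "\<dots> = p1 n * p2 m * \<phi>0 * \<phi>1 ^ n * \<phi>2 ^ m"
      unfolding J_def prod_J E1 E2 E3 E4 E5 ..
    finally show ?thesis .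
  qed
  have inner: "(\<lambda>m. CLINT \<omega>|M. (if N2 \<omega> = m then (if N1 \<omega> = n then F \<omega> else 0) else 0))
          sums (CLINT \<omega>|M. (if N1 \<omega> = n then F \<omega> else 0))" for n
    by (rule sums_split_nat[OF N2m integrable_if_eq[OF N1m Fint]])
  have "(CLINT \<omega>|M. (if N1 \<omega> = n then F \<omega> else 0)) = p1 n * \<phi>0 * \<phi>1 ^ n * exp (of_real l2 * (\<phi>2 - 1))" for n
  proof -
    have "(\<lambda>m. (p1 n * \<phi>0 * \<phi>1 ^ n) * (p2 m * \<phi>2 ^ m)) sums ((p1 n * \<phi>0 * \<phi>1 ^ n) * exp (of_real l2 * (\<phi>2 - 1)))"
      by (rule sums_mult) (use poisson_sums[OF l2] in \<open>simp add: p2_def\<close>)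
    moreover have "(\<lambda>m. (p1 n * \<phi>0 * \<phi>1 ^ n) * (p2 m * \<phi>2 ^ m)) sums (CLINT \<omega>|M. (if N1 \<omega> = n then F \<omega> else 0))"
    proof -
      have "(\<lambda>m. (p1 n * \<phi>0 * \<phi>1 ^ n) * (p2 m * \<phi>2 ^ m)) = (\<lambda>m. p1 n * p2 m * \<phi>0 * \<phi>1 ^ n * \<phi>2 ^ m)"
        by (rule ext) (simp only: mult_ac)
      then show ?thesis using inner[of n] unfolding T by simp
    qed
    ultimately show ?thesis by (simp add: sums_unique2)
  qed
  moreover have "(\<lambda>n. CLINT \<omega>|M. (if N1 \<omega> = n then F \<omega> else 0)) sums (CLINT \<omega>|M. F \<omega>)"
    by (rule sums_split_nat[OF N1m Fint])
  ultimately have "(\<lambda>n. (p1 n * \<phi>1 ^ n) * (\<phi>0 * exp (of_real l2 * (\<phi>2 - 1)))) sums (CLINT \<omega>|M. F \<omega>)"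
  proof -
    assume a: "\<And>n. (CLINT \<omega>|M. (if N1 \<omega> = n then F \<omega> else 0)) = p1 n * \<phi>0 * \<phi>1 ^ n * exp (of_real l2 * (\<phi>2 - 1))"
      and b: "(\<lambda>n. CLINT \<omega>|M. (if N1 \<omega> = n then F \<omega> else 0)) sums (CLINT \<omega>|M. F \<omega>)"
    have "(\<lambda>n. (p1 n * \<phi>1 ^ n) * (\<phi>0 * exp (of_real l2 * (\<phi>2 - 1)))) = (\<lambda>n. CLINT \<omega>|M. (if N1 \<omega> = n then F \<omega> else 0))"
      unfolding a by (rule ext) (simp only: mult_ac)
    then show ?thesis using b by simp
  qed
  moreover have "(\<lambda>n. (p1 n * \<phi>1 ^ n) * (\<phi>0 * exp (of_real l2 * (\<phi>2 - 1)))) sums (exp (of_real l1 * (\<phi>1 - 1)) * (\<phi>0 * exp (of_real l2 * (\<phi>2 - 1))))"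
    by (rule sums_mult2) (use poisson_sums[OF l1] in \<open>simp add: p1_def\<close>)
  ultimately have "(CLINT \<omega>|M. F \<omega>) = exp (of_real l1 * (\<phi>1 - 1)) * (\<phi>0 * exp (of_real l2 * (\<phi>2 - 1)))"
    by (rule sums_unique2)
  then show ?thesis unfolding F_def S_def \<phi>0_def by (simp add: ac_simps)
qed



lemma powr_set_integrable:
  fixes \<alpha> :: real
  assumes "0 \<le> \<alpha>" "\<alpha> < 1"
  shows "set_integrable lborel {0<..<1} (\<lambda>x::real. x powr (-\<alpha>))"
proof -
  have "(\<lambda>x::real. x powr (-\<alpha>)) integrable_on {0<..1}"
    by (rule integrable_on_powr_from_0') (use assms in auto)
  then have "(\<lambda>x::real. x powr (-\<alpha>)) absolutely_integrable_on {0<..1}"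
    by (rule nonnegative_absolutely_integrable_1) auto
  then have "integrable lebesgue (\<lambda>x::real. indicator {0<..1} x *\<^sub>R x powr (-\<alpha>))"
    by (simp add: set_integrable_def)
  then have "integrable lborel (\<lambda>x::real. indicator {0<..1} x *\<^sub>R x powr (-\<alpha>))"
    by (subst (asm) integrable_completion) auto
  then have "set_integrable lborel {0<..1} (\<lambda>x::real. x powr (-\<alpha>))"
    by (simp add: set_integrable_def)
  then show ?thesis by (rule set_integrable_subset) auto
qed

lemma norm_iexp_minus1: "norm (iexp t - 1) \<le> \<bar>t\<bar>"
  using iexp_approx1[of t 0] by simp

lemma norm_iexp_minus1': "norm (iexp t - 1) \<le> 2"
proof -
  have "norm (iexp t - 1) \<le> norm (iexp t) + norm (1::complex)" by (rule norm_triangle_ineq4)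
  also have "\<dots> = 2" by (simp del: of_real_mult)
  finally show ?thesis .
qed

lemma rdts_split:
  fixes \<alpha> p z K1 K2 :: real and \<phi>1 \<phi>2 :: complex
  assumes a0: "0 \<le> \<alpha>" and a1: "\<alpha> < 1"
    and K1def: "K1 = (LBINT x:{1<..}. exp (- (x powr p)) * x powr (-1 - \<alpha>))"
    and K2def: "K2 = (LBINT x:{0<..<1}. (exp (- (x powr p)) - exp (- x)) * x powr (- \<alpha> - 1))"
    and i1: "set_integrable lborel {1<..} (\<lambda>x. exp (- (x powr p)) * x powr (-1 - \<alpha>))"
    and i2: "set_integrable lborel {0<..<1} (\<lambda>x. (exp (- (x powr p)) - exp (- x)) * x powr (- \<alpha> - 1))"
    and c1: "of_real K1 * \<phi>1 = (CLINT x|lborel. indicator {1<..} x *\<^sub>R (complex_of_real (exp (- (x powr p)) * x powr (-1 - \<alpha>)) * iexp (z * x)))"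
    and c2: "of_real K2 * \<phi>2 = (CLINT x|lborel. indicator {0<..<1} x *\<^sub>R (complex_of_real ((exp (- (x powr p)) - exp (- x)) * x powr (- \<alpha> - 1)) * iexp (z * x)))"
  shows "set_lebesgue_integral lborel {0<..} (\<lambda>x::real. (iexp (x * z) - 1) * of_real (x powr (-1 - \<alpha>) * exp (- ((1 * x) powr p))))
       = set_lebesgue_integral lborel {0<..<1} (\<lambda>x::real. (iexp (x * z) - 1) * of_real (x powr (-1 - \<alpha>) * exp (- x)))
         + of_real K1 * (\<phi>1 - 1) + of_real K2 * (\<phi>2 - 1)"
proof -
  define w1 where "w1 = (\<lambda>x::real. exp (- (x powr p)) * x powr (-1 - \<alpha>))"
  define w2 where "w2 = (\<lambda>x::real. (exp (- (x powr p)) - exp (- x)) * x powr (- \<alpha> - 1))"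
  define w0 where "w0 = (\<lambda>x::real. x powr (-1 - \<alpha>) * exp (- x))"
  define e where "e = (\<lambda>x::real. iexp (x * z) - 1)"
  define A where "A = (\<lambda>x::real. indicator {0<..<1} x *\<^sub>R (e x * of_real (w0 x)))"
  define B where "B = (\<lambda>x::real. indicator {0<..<1} x *\<^sub>R (e x * of_real (w2 x)))"
  define C where "C = (\<lambda>x::real. indicator {1<..} x *\<^sub>R (e x * of_real (w1 x)))"
  have [measurable]: "w1 \<in> borel_measurable borel" "w2 \<in> borel_measurable borel" "w0 \<in> borel_measurable borel"
     "e \<in> borel_measurable borel"
    unfolding w1_def w2_def w0_def e_def by measurable
  have Am[measurable]: "A \<in> borel_measurable lborel" unfolding A_def by measurable
  have Bm[measurable]: "B \<in> borel_measurable lborel" unfolding B_def by measurable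
  have Cm[measurable]: "C \<in> borel_measurable lborel" unfolding C_def by measurable
  have i1': "integrable lborel (\<lambda>x. indicator {1<..} x *\<^sub>R w1 x)" using i1 by (simp add: set_integrable_def w1_def)
  have i2': "integrable lborel (\<lambda>x. indicator {0<..<1} x *\<^sub>R w2 x)" using i2 by (simp add: set_integrable_def w2_def)
  have ip0: "integrable lborel (\<lambda>x. \<bar>z\<bar> * (indicator {0<..<1} x * x powr (-\<alpha>)))"
    using powr_set_integrable[OF a0 a1] unfolding set_integrable_def by (intro integrable_mult_right) simp
  have ip: "integrable lborel (\<lambda>x. indicator {0<..<1} x *\<^sub>R (\<bar>z\<bar> * x powr (-\<alpha>)))"
    using ip0 by (simp add: mult.left_commute)
  have iA: "integrable lborel A"
  proof (rule Bochner_Integration.integrable_bound[OF ip Am], rule AE_I2)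
    fix x :: real
    show "norm (A x) \<le> norm (indicator {0<..<1} x *\<^sub>R (\<bar>z\<bar> * x powr (-\<alpha>)))"
    proof (cases "x \<in> {0<..<1}")
      case True
      then have x0: "0 < x" and x1: "x < 1" by auto
      have "norm (e x) \<le> \<bar>x * z\<bar>" unfolding e_def by (rule norm_iexp_minus1)
      moreover have "0 \<le> w0 x" "w0 x \<le> x powr (-1 - \<alpha>)" using x0 by (auto simp: w0_def)
      ultimately have "norm (e x * of_real (w0 x)) \<le> \<bar>x * z\<bar> * x powr (-1 - \<alpha>)"
        by (auto simp: norm_mult intro!: mult_mono)
      also have "\<dots> = \<bar>z\<bar> * (x powr 1 * x powr (-1 - \<alpha>))" using x0 by (simp add: abs_mult)
      also have "\<dots> = \<bar>z\<bar> * x powr (1 + (-1 - \<alpha>))" by (subst powr_add) simp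
      also have "\<dots> = \<bar>z\<bar> * x powr (-\<alpha>)" by simp
      finally show ?thesis using True by (simp add: A_def)
    qed (simp add: A_def)
  qed
  have iB: "integrable lborel B"
  proof (rule Bochner_Integration.integrable_bound[OF integrable_mult_right[OF integrable_norm[OF i2'], of 2] Bm], rule AE_I2)
    fix x :: real
    have "norm (e x * of_real (w2 x)) \<le> 2 * \<bar>w2 x\<bar>"
      unfolding norm_mult e_def norm_of_real by (rule mult_right_mono) (auto simp: norm_iexp_minus1' simp del: of_real_mult)
    then show "norm (B x) \<le> norm (2 * norm (indicator {0<..<1} x *\<^sub>R w2 x))"
      by (auto simp: B_def indicator_def)
  qed
  have iC: "integrable lborel C"
  proof (rule Bochner_Integration.integrable_bound[OF integrable_mult_right[OF integrable_norm[OF i1'], of 2] Cm], rule AE_I2)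
    fix x :: real
    have "norm (e x * of_real (w1 x)) \<le> 2 * \<bar>w1 x\<bar>"
      unfolding norm_mult e_def norm_of_real by (rule mult_right_mono) (auto simp: norm_iexp_minus1' simp del: of_real_mult)
    then show "norm (C x) \<le> norm (2 * norm (indicator {1<..} x *\<^sub>R w1 x))"
      by (auto simp: C_def indicator_def)
  qed
  have split: "(CLINT x|lborel. indicator {0<..} x *\<^sub>R ((iexp (x * z) - 1) * of_real (x powr (-1 - \<alpha>) * exp (- ((1 * x) powr p)))))
       = (CLINT x|lborel. A x + B x + C x)"
  proof (rule integral_cong_AE)
    show "AE x in lborel. indicator {0<..} x *\<^sub>R ((iexp (x * z) - 1) * of_real (x powr (-1 - \<alpha>) * exp (- ((1 * x) powr p)))) = A x + B x + C x"
    proof (rule eventually_mono[OF AE_lborel_singleton[of 1]])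
      fix x :: real assume "x \<noteq> 1"
      then consider "x \<le> 0" | "0 < x" "x < 1" | "1 < x" by linarith
      then show "indicator {0<..} x *\<^sub>R ((iexp (x * z) - 1) * of_real (x powr (-1 - \<alpha>) * exp (- ((1 * x) powr p)))) = A x + B x + C x"
      proof cases
        case 2
        have "complex_of_real (x powr (-1 - \<alpha>) * exp (- ((1 * x) powr p))) = of_real (w0 x) + of_real (w2 x)"
        proof -
          have e': "x powr (- \<alpha> - 1) = x powr (-1 - \<alpha>)" by (rule arg_cong[where f="\<lambda>t. x powr t"]) simp
          show ?thesis by (simp add: w0_def w2_def e' algebra_simps)
        qed
        then show ?thesis using 2 by (simp add: A_def B_def C_def e_def distrib_left)
      next
        case 3 then show ?thesis by (simp add: A_def B_def C_def e_def w1_def mult.commute)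
      qed (simp_all add: A_def B_def C_def)
    qed
  qed measurable
  have IB: "(CLINT x|lborel. B x) = of_real K2 * (\<phi>2 - 1)"
  proof -
    have Beq: "B = (\<lambda>x. indicator {0<..<1} x *\<^sub>R (complex_of_real (w2 x) * iexp (z * x)) - complex_of_real (indicator {0<..<1} x *\<^sub>R w2 x))"
      by (auto simp: B_def e_def fun_eq_iff algebra_simps indicator_def)
    have int1: "integrable lborel (\<lambda>x. indicator {0<..<1} x *\<^sub>R (complex_of_real (w2 x) * iexp (z * x)))"
    proof (rule Bochner_Integration.integrable_bound[OF integrable_norm[OF i2']], measurable, rule AE_I2)
      fix x show "norm (indicator {0<..<1} x *\<^sub>R (complex_of_real (w2 x) * iexp (z * x))) \<le> norm (norm (indicator {0<..<1} x *\<^sub>R w2 x))"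
        by (simp add: norm_mult del: of_real_mult)
    qed
    have int2: "integrable lborel (\<lambda>x. complex_of_real (indicator {0<..<1} x *\<^sub>R w2 x))"
      using i2' by (simp del: of_real_mult)
    have c': "of_real K2 * \<phi>2 = (CLINT x|lborel. indicator {0<..<1} x *\<^sub>R (complex_of_real (w2 x) * iexp (z * x)))"
      using c2 by (simp only: w2_def)
    have k': "K2 = (LINT x|lborel. indicator {0<..<1} x *\<^sub>R w2 x)"
      using K2def by (simp only: w2_def set_lebesgue_integral_def)
    have "(CLINT x|lborel. B x) = (CLINT x|lborel. indicator {0<..<1} x *\<^sub>R (complex_of_real (w2 x) * iexp (z * x))) - (CLINT x|lborel. complex_of_real (indicator {0<..<1} x *\<^sub>R w2 x))"
      unfolding Beq by (rule Bochner_Integration.integral_diff[OF int1 int2])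
    also have "\<dots> = of_real K2 * \<phi>2 - of_real K2"
    proof -
      have h: "(CLINT x|lborel. complex_of_real (indicator {0<..<1} x *\<^sub>R w2 x)) = of_real K2"
        unfolding k' by (rule integral_complex_of_real)
      show ?thesis by (simp only: h c')
    qed
    finally show ?thesis by (simp add: right_diff_distrib)
  qed
  have IC: "(CLINT x|lborel. C x) = of_real K1 * (\<phi>1 - 1)"
  proof -
    have Beq: "C = (\<lambda>x. indicator {1<..} x *\<^sub>R (complex_of_real (w1 x) * iexp (z * x)) - complex_of_real (indicator {1<..} x *\<^sub>R w1 x))"
      by (auto simp: C_def e_def fun_eq_iff algebra_simps indicator_def)
    have int1: "integrable lborel (\<lambda>x. indicator {1<..} x *\<^sub>R (complex_of_real (w1 x) * iexp (z * x)))"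
    proof (rule Bochner_Integration.integrable_bound[OF integrable_norm[OF i1']], measurable, rule AE_I2)
      fix x show "norm (indicator {1<..} x *\<^sub>R (complex_of_real (w1 x) * iexp (z * x))) \<le> norm (norm (indicator {1<..} x *\<^sub>R w1 x))"
        by (simp add: norm_mult del: of_real_mult)
    qed
    have int2: "integrable lborel (\<lambda>x. complex_of_real (indicator {1<..} x *\<^sub>R w1 x))"
      using i1' by (simp del: of_real_mult)
    have c': "of_real K1 * \<phi>1 = (CLINT x|lborel. indicator {1<..} x *\<^sub>R (complex_of_real (w1 x) * iexp (z * x)))"
      using c1 by (simp only: w1_def)
    have k': "K1 = (LINT x|lborel. indicator {1<..} x *\<^sub>R w1 x)"
      using K1def by (simp only: w1_def set_lebesgue_integral_def)
    have "(CLINT x|lborel. C x) = (CLINT x|lborel. indicator {1<..} x *\<^sub>R (complex_of_real (w1 x) * iexp (z * x))) - (CLINT x|lborel. complex_of_real (indicator {1<..} x *\<^sub>R w1 x))"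
      unfolding Beq by (rule Bochner_Integration.integral_diff[OF int1 int2])
    also have "\<dots> = of_real K1 * \<phi>1 - of_real K1"
    proof -
      have h: "(CLINT x|lborel. complex_of_real (indicator {1<..} x *\<^sub>R w1 x)) = of_real K1"
        unfolding k' by (rule integral_complex_of_real)
      show ?thesis by (simp only: h c')
    qed
    finally show ?thesis by (simp add: right_diff_distrib)
  qed
  have "(CLINT x|lborel. A x + B x + C x) = (CLINT x|lborel. A x) + (CLINT x|lborel. B x) + (CLINT x|lborel. C x)"
    using iA iB iC by simp
  then show ?thesis
    unfolding set_lebesgue_integral_def split IB IC by (simp add: A_def e_def w0_def)
qed


theorem theorem1:
  fixes M :: "'a measure" and M' :: "'b measure"
    and p \<alpha> C :: real
    and X :: "'b \<Rightarrow> real"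
    and N1 N2 :: "'a \<Rightarrow> nat" and X0 :: "'a \<Rightarrow> real"
    and Xs Ys :: "nat \<Rightarrow> 'a \<Rightarrow> real"
  assumes "0 \<le> \<alpha>" "\<alpha> < 1" "1 < p" "0 < C"
    and "prob_space M'" "X \<in> borel_measurable M'"
    and "is_RDTS p \<alpha> 1 C (distr M' borel X)"
    and "prob_space M"
    and "N1 \<in> measurable M (count_space UNIV)" "N2 \<in> measurable M (count_space UNIV)"
    and "X0 \<in> borel_measurable M"
    and "\<And>j. j \<ge> 1 \<Longrightarrow> Xs j \<in> borel_measurable M"
    and "\<And>j. j \<ge> 1 \<Longrightarrow> Ys j \<in> borel_measurable M"
    and "prob_space.indep_vars M
           (\<lambda>i. case i of IN1 \<Rightarrow> embed_measure (count_space UNIV) Inl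
                  | IN2 \<Rightarrow> embed_measure (count_space UNIV) Inl
                  | _ \<Rightarrow> embed_measure borel Inr)
           (\<lambda>i \<omega>. case i of IN1 \<Rightarrow> Inl (N1 \<omega>) | IN2 \<Rightarrow> Inl (N2 \<omega>) | IX0 \<Rightarrow> Inr (X0 \<omega>)
                    | IX j \<Rightarrow> Inr (Xs j \<omega>) | IY j \<Rightarrow> Inr (Ys j \<omega>))
           ({IN1, IN2, IX0} \<union> {IX j | j. j \<ge> 1} \<union> {IY j | j. j \<ge> 1})"
    and "distr M (count_space UNIV) N1 = measure_pmf (poisson_pmf (C * K1 p \<alpha>))"
    and "distr M (count_space UNIV) N2 = measure_pmf (poisson_pmf (C * K2 p \<alpha>))"
    and "is_TTS \<alpha> C (distr M borel X0)"
    and "\<And>j. j \<ge> 1 \<Longrightarrow> distributed M lborel (Xs j) (\<lambda>x. ennreal (f1 p \<alpha> x))"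
    and "\<And>j. j \<ge> 1 \<Longrightarrow> distributed M lborel (Ys j) (\<lambda>x. ennreal (f2 p \<alpha> x))"
  shows "distr M' borel X =
         distr M borel (\<lambda>\<omega>. X0 \<omega> + (\<Sum>j\<in>{1..N1 \<omega>}. Xs j \<omega>) + (\<Sum>j\<in>{1..N2 \<omega>}. Ys j \<omega>))"
proof -
  note a = assms
  interpret P: prob_space M by (rule a(8))
  define g1 where "g1 = (\<lambda>x::real. exp (- (x powr p)) * x powr (-1 - \<alpha>))"
  define g2 where "g2 = (\<lambda>x::real. (exp (- (x powr p)) - exp (- x)) * x powr (- \<alpha> - 1))"
  have g1m[measurable]: "g1 \<in> borel_measurable borel" unfolding g1_def by measurable
  have g2m[measurable]: "g2 \<in> borel_measurable borel" unfolding g2_def by measurable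
  have g2nn: "0 \<le> g2 x" if "x \<in> {0<..<1}" for x
  proof -
    from that have "x powr p \<le> x" using a(3) by (intro powr_le_one_le) auto
    then show ?thesis by (simp add: g2_def)
  qed
  have f1eq: "\<And>x. f1 p \<alpha> x = (if x \<in> {1<..} then g1 x / K1 p \<alpha> else 0)"
    by (simp add: f1_def g1_def)
  have K1eq: "K1 p \<alpha> = (LBINT x:{1<..}. g1 x)" by (simp add: K1_def g1_def)
  have g1nn: "\<And>x. x \<in> {1<..} \<Longrightarrow> 0 \<le> g1 x" by (simp add: g1_def)
  have S1: "{1::real<..} \<in> sets borel" by simp
  note D1 = density_facts[OF a(8) a(18)[OF order_refl] f1eq K1eq g1nn S1 g1m]
  have f2eq: "\<And>x. f2 p \<alpha> x = (if x \<in> {0<..<1} then g2 x / K2 p \<alpha> else 0)"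
    by (simp add: f2_def g2_def)
  have K2eq: "K2 p \<alpha> = (LBINT x:{0<..<1}. g2 x)" by (simp add: K2_def g2_def)
  have S2: "{0<..<1::real} \<in> sets borel" by simp
  note D2 = density_facts[OF a(8) a(19)[OF order_refl] f2eq K2eq g2nn S2 g2m]
  have sameX: "(CLINT \<omega>|M. iexp (z * Xs j \<omega>)) = (CLINT \<omega>|M. iexp (z * Xs 1 \<omega>))" if "j \<ge> 1" for j z
  proof -
    have "distr M lborel (Xs j) = distr M lborel (Xs 1)"
      using a(18)[of j] a(18)[of 1] that by (simp add: distributed_def)
    moreover have "(CLINT \<omega>|M. iexp (z * Xs k \<omega>)) = (CLINT x|distr M lborel (Xs k). iexp (z * x))" if "k \<ge> 1" for k
      using a(12)[OF that] by (subst integral_distr) auto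
    ultimately show ?thesis using that by simp
  qed
  have sameY: "(CLINT \<omega>|M. iexp (z * Ys j \<omega>)) = (CLINT \<omega>|M. iexp (z * Ys 1 \<omega>))" if "j \<ge> 1" for j z
  proof -
    have "distr M lborel (Ys j) = distr M lborel (Ys 1)"
      using a(19)[of j] a(19)[of 1] that by (simp add: distributed_def)
    moreover have "(CLINT \<omega>|M. iexp (z * Ys k \<omega>)) = (CLINT x|distr M lborel (Ys k). iexp (z * x))" if "k \<ge> 1" for k
      using a(13)[OF that] by (subst integral_distr) auto
    ultimately show ?thesis using that by simp
  qed
  define S where "S = (\<lambda>\<omega>. X0 \<omega> + (\<Sum>j\<in>{1..N1 \<omega>}. Xs j \<omega>) + (\<Sum>j\<in>{1..N2 \<omega>}. Ys j \<omega>))"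
  have s1: "(\<lambda>\<omega>. \<Sum>j\<in>{1..N1 \<omega>}. Xs j \<omega>) \<in> borel_measurable M"
    by (rule measurable_compose_countable[where f="\<lambda>n \<omega>. \<Sum>j\<in>{1..n}. Xs j \<omega>", OF _ a(9)])
       (auto intro!: borel_measurable_sum a(12))
  have s2: "(\<lambda>\<omega>. \<Sum>j\<in>{1..N2 \<omega>}. Ys j \<omega>) \<in> borel_measurable M"
    by (rule measurable_compose_countable[where f="\<lambda>n \<omega>. \<Sum>j\<in>{1..n}. Ys j \<omega>", OF _ a(10)])
       (auto intro!: borel_measurable_sum a(13))
  have Sm[measurable]: "S \<in> borel_measurable M"
    unfolding S_def using s1 s2 a(11) by measurable
  have charS: "char (distr M borel S) z = rdts_cf p \<alpha> 1 C z" for z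
  proof -
    define \<phi>1 where "\<phi>1 = (CLINT \<omega>|M. iexp (z * Xs 1 \<omega>))"
    define \<phi>2 where "\<phi>2 = (CLINT \<omega>|M. iexp (z * Ys 1 \<omega>))"
    have "char (distr M borel S) z = (CLINT \<omega>|M. iexp (z * S \<omega>))"
      unfolding char_def by (subst integral_distr) auto
    also have "\<dots> = (CLINT \<omega>|M. iexp (z * X0 \<omega>)) * exp (of_real (C * K1 p \<alpha>) * (\<phi>1 - 1)) * exp (of_real (C * K2 p \<alpha>) * (\<phi>2 - 1))"
    proof -
      have l1: "0 < C * K1 p \<alpha>" using D1(1) a(4) by simp
      have l2: "0 < C * K2 p \<alpha>" using D2(1) a(4) by simp
      have ph1: "\<And>j. j \<ge> 1 \<Longrightarrow> (CLINT \<omega>|M. iexp (z * Xs j \<omega>)) = \<phi>1"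
        unfolding \<phi>1_def by (rule sameX)
      have ph2: "\<And>j. j \<ge> 1 \<Longrightarrow> (CLINT \<omega>|M. iexp (z * Ys j \<omega>)) = \<phi>2"
        unfolding \<phi>2_def by (rule sameY)
      show ?thesis unfolding S_def
        by (rule P.compound_char[OF refl refl refl a(14) a(9) a(10) a(11) a(12) a(13) a(15) a(16) l1 l2 ph1 ph2])
    qed
    also have "(CLINT \<omega>|M. iexp (z * X0 \<omega>)) = tts_cf \<alpha> C z"
    proof -
      have "(CLINT \<omega>|M. iexp (z * X0 \<omega>)) = char (distr M borel X0) z"
        unfolding char_def using a(11) by (subst integral_distr) auto
      then show ?thesis using a(17) by (simp add: is_TTS_def)
    qed
    also have "tts_cf \<alpha> C z * exp (of_real (C * K1 p \<alpha>) * (\<phi>1 - 1)) * exp (of_real (C * K2 p \<alpha>) * (\<phi>2 - 1))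
        = rdts_cf p \<alpha> 1 C z"
    proof -
      have split: "set_lebesgue_integral lborel {0<..} (\<lambda>x::real. (iexp (x * z) - 1) * of_real (x powr (-1 - \<alpha>) * exp (- ((1 * x) powr p))))
       = set_lebesgue_integral lborel {0<..<1} (\<lambda>x::real. (iexp (x * z) - 1) * of_real (x powr (-1 - \<alpha>) * exp (- x)))
         + of_real (K1 p \<alpha>) * (\<phi>1 - 1) + of_real (K2 p \<alpha>) * (\<phi>2 - 1)"
      proof (rule rdts_split[OF a(1) a(2) K1_def K2_def])
        show "set_integrable lborel {1<..} (\<lambda>x. exp (- (x powr p)) * x powr (-1 - \<alpha>))"
          using D1(2) unfolding g1_def .
        show "set_integrable lborel {0<..<1} (\<lambda>x. (exp (- (x powr p)) - exp (- x)) * x powr (- \<alpha> - 1))"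
          using D2(2) unfolding g2_def .
        show "of_real (K1 p \<alpha>) * \<phi>1 = (CLINT x|lborel. indicator {1<..} x *\<^sub>R (complex_of_real (exp (- (x powr p)) * x powr (-1 - \<alpha>)) * iexp (z * x)))"
          using D1(3)[of z] unfolding g1_def \<phi>1_def .
        show "of_real (K2 p \<alpha>) * \<phi>2 = (CLINT x|lborel. indicator {0<..<1} x *\<^sub>R (complex_of_real ((exp (- (x powr p)) - exp (- x)) * x powr (- \<alpha> - 1)) * iexp (z * x)))"
          using D2(3)[of z] unfolding g2_def \<phi>2_def .
      qed
      define I0 where "I0 = set_lebesgue_integral lborel {0<..<1} (\<lambda>x::real. (iexp (x * z) - 1) * of_real (x powr (-1 - \<alpha>) * exp (- x)))"
      have e: "complex_of_real C * (I0 + of_real (K1 p \<alpha>) * (\<phi>1 - 1) + of_real (K2 p \<alpha>) * (\<phi>2 - 1))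
          = of_real C * I0 + of_real (C * K1 p \<alpha>) * (\<phi>1 - 1) + of_real (C * K2 p \<alpha>) * (\<phi>2 - 1)"
        by (simp add: algebra_simps)
      show ?thesis
        unfolding rdts_cf_def tts_cf_def split I0_def[symmetric] e exp_add ..
    qed
    finally show ?thesis .
  qed
  have "distr M' borel X = distr M borel S"
  proof (rule Levy_uniqueness)
    show "real_distribution (distr M' borel X)" using a(7) by (simp add: is_RDTS_def)
    show "real_distribution (distr M borel S)" by (rule P.real_distribution_distr) simp
    show "char (distr M' borel X) = char (distr M borel S)"
      using a(7) charS by (auto simp: is_RDTS_def fun_eq_iff)
  qed
  then show ?thesis by (simp add: S_def)
qed



end
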